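(* Let $p<0$ and $q\in\mathbb{R}$. Then any two elements of $\mathcal{A}_{p,q}^{-} = \{A\in S(4,\mathbb{R}) : \operatorname{Pf}(A) = p,\ \operatorname{s}(A) = q\}$ are equivalent under the action $\rho$, i.e. for any $A,B\in\mathcal{A}_{p,q}^{-}$ there is $P\in\operatorname{Sp}(4)$ with $B = P^TAP$.
   Context: $S(4,\mathbb{R})$ is the set of invertible skew-symmetric real $4\times4$ matrices; $J = \operatorname{diag}(J_0,J_0)$ with $J_0 = \begin{bmatrix} 0 & 1 \\ -1 & 0\end{bmatrix}$; $\operatorname{Sp}(4) = \{P : P^TJP = J\}$; $\rho(P,A) = P^TAP$. For $A = \begin{bmatrix} 0 & a & b & c \\ -a & 0 & d & e \\ -b & -d & 0 & f \\ -c & -e & -f & 0\end{bmatrix}$, $\operatorname{Pf}(A) = af-be+cd$ and $\operatorname{s}(A) = a+f$. *)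

theory Defs
  imports "HOL-Analysis.Analysis" "HOL-Library.Numeral_Type"
begin

(* Matrices are real^4^4; the paper's indices 1,2,3,4 correspond to the
   elements 0,1,2,3 of the numeral type 4. *)

definition skew4 :: "real^4^4 \<Rightarrow> bool" where
  "skew4 A \<longleftrightarrow> transpose A = - A"

definition S4 :: "(real^4^4) set" where
  "S4 = {A. skew4 A \<and> invertible A}"

definition Jmat :: "real^4^4" where
  "Jmat = (\<chi> i j.
     if i = 0 \<and> j = 1 then 1 else if i = 1 \<and> j = 0 then -1
     else if i = 2 \<and> j = 3 then 1 else if i = 3 \<and> j = 2 then -1 else 0)"

definition Sp4 :: "(real^4^4) set" where
  "Sp4 = {P. transpose P ** Jmat ** P = Jmat}"

definition rho :: "real^4^4 \<Rightarrow> real^4^4 \<Rightarrow> real^4^4" where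
  "rho P A = transpose P ** A ** P"

(* With A = [[0,a,b,c],[-a,0,d,e],[-b,-d,0,f],[-c,-e,-f,0]]:
   a = A12, b = A13, c = A14, d = A23, e = A24, f = A34 *)
definition Pf :: "real^4^4 \<Rightarrow> real" where
  "Pf A = A$0$1 * A$2$3 - A$0$2 * A$1$3 + A$0$3 * A$1$2"

definition s4 :: "real^4^4 \<Rightarrow> real" where
  "s4 A = A$0$1 + A$2$3"

definition Aminus :: "real \<Rightarrow> real \<Rightarrow> (real^4^4) set" where
  "Aminus p q = {A \<in> S4. Pf A = p \<and> s4 A = q}"

end

theory Submission
  imports Defs
begin

lemma forall4: "(\<forall>i::4. P i) \<longleftrightarrow> P 0 \<and> P 1 \<and> P 2 \<and> P 3"
proof -
  have e: "(4::4) = 0" by simp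
  show ?thesis using forall_4[of P] unfolding e by auto
qed

lemma sum4: "sum f (UNIV::4 set) = f 0 + f 1 + f 2 + f 3"
proof -
  have e: "(4::4) = 0" by simp
  show ?thesis using sum_4[of f] unfolding e by (simp add: ac_simps)
qed

lemma skew_entries:
  assumes "skew4 M"
  shows "M$i$j = - M$j$i"
proof -
  have "transpose M $ j $ i = (- M) $ j $ i" using assms unfolding skew4_def by simp
  thus ?thesis by (simp add: transpose_def)
qed


lemma decomp01:
  assumes "skew4 M" "Pf M = 0" "M$0$1 \<noteq> 0"
  shows "\<exists>u w :: real^4. \<forall>k l. M$k$l = u$k*w$l - w$k*u$l"
proof (intro exI)
  have sk: "\<And>i j. M$i$j = - M$j$i" using skew_entries[OF assms(1)] .
  have dg: "\<And>i. M$i$i = 0"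
  proof -
    fix i have "M$i$i = - M$i$i" using sk[of i i] .
    thus "M$i$i = 0" by simp
  qed
  have pf: "M$0$1 * M$2$3 - M$0$2 * M$1$3 + M$0$3 * M$1$2 = 0" using assms(2) by (simp add: Pf_def)
  have low: "M$1$0 = - M$0$1" "M$2$0 = - M$0$2" "M$3$0 = - M$0$3" "M$2$1 = - M$1$2"
     "M$3$1 = - M$1$3" "M$3$2 = - M$2$3" by (rule sk)+
  show "\<forall>k l. M$k$l = (\<chi> k. M$k$0 / M$0$1)$k*(\<chi> k. M$k$1)$l - (\<chi> k. M$k$1)$k*(\<chi> k. M$k$0 / M$0$1)$l"
    unfolding forall4 using assms(3) pf by (simp add: low dg field_simps)
qed

lemma decomp02:
  assumes "skew4 M" "Pf M = 0" "M$0$2 \<noteq> 0"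
  shows "\<exists>u w :: real^4. \<forall>k l. M$k$l = u$k*w$l - w$k*u$l"
proof (intro exI)
  have sk: "\<And>i j. M$i$j = - M$j$i" using skew_entries[OF assms(1)] .
  have dg: "\<And>i. M$i$i = 0"
  proof -
    fix i have "M$i$i = - M$i$i" using sk[of i i] .
    thus "M$i$i = 0" by simp
  qed
  have pf: "M$0$1 * M$2$3 - M$0$2 * M$1$3 + M$0$3 * M$1$2 = 0" using assms(2) by (simp add: Pf_def)
  have low: "M$1$0 = - M$0$1" "M$2$0 = - M$0$2" "M$3$0 = - M$0$3" "M$2$1 = - M$1$2"
     "M$3$1 = - M$1$3" "M$3$2 = - M$2$3" by (rule sk)+
  show "\<forall>k l. M$k$l = (\<chi> k. M$k$0 / M$0$2)$k*(\<chi> k. M$k$2)$l - (\<chi> k. M$k$2)$k*(\<chi> k. M$k$0 / M$0$2)$l"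
    unfolding forall4 using assms(3) pf by (simp add: low dg field_simps)
qed

lemma decomp03:
  assumes "skew4 M" "Pf M = 0" "M$0$3 \<noteq> 0"
  shows "\<exists>u w :: real^4. \<forall>k l. M$k$l = u$k*w$l - w$k*u$l"
proof (intro exI)
  have sk: "\<And>i j. M$i$j = - M$j$i" using skew_entries[OF assms(1)] .
  have dg: "\<And>i. M$i$i = 0"
  proof -
    fix i have "M$i$i = - M$i$i" using sk[of i i] .
    thus "M$i$i = 0" by simp
  qed
  have pf: "M$0$1 * M$2$3 - M$0$2 * M$1$3 + M$0$3 * M$1$2 = 0" using assms(2) by (simp add: Pf_def)
  have low: "M$1$0 = - M$0$1" "M$2$0 = - M$0$2" "M$3$0 = - M$0$3" "M$2$1 = - M$1$2"
     "M$3$1 = - M$1$3" "M$3$2 = - M$2$3" by (rule sk)+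
  show "\<forall>k l. M$k$l = (\<chi> k. M$k$0 / M$0$3)$k*(\<chi> k. M$k$3)$l - (\<chi> k. M$k$3)$k*(\<chi> k. M$k$0 / M$0$3)$l"
    unfolding forall4 using assms(3) pf by (simp add: low dg field_simps)
qed

lemma decomp12:
  assumes "skew4 M" "Pf M = 0" "M$1$2 \<noteq> 0"
  shows "\<exists>u w :: real^4. \<forall>k l. M$k$l = u$k*w$l - w$k*u$l"
proof (intro exI)
  have sk: "\<And>i j. M$i$j = - M$j$i" using skew_entries[OF assms(1)] .
  have dg: "\<And>i. M$i$i = 0"
  proof -
    fix i have "M$i$i = - M$i$i" using sk[of i i] .
    thus "M$i$i = 0" by simp
  qed
  have pf: "M$0$1 * M$2$3 - M$0$2 * M$1$3 + M$0$3 * M$1$2 = 0" using assms(2) by (simp add: Pf_def)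
  have low: "M$1$0 = - M$0$1" "M$2$0 = - M$0$2" "M$3$0 = - M$0$3" "M$2$1 = - M$1$2"
     "M$3$1 = - M$1$3" "M$3$2 = - M$2$3" by (rule sk)+
  show "\<forall>k l. M$k$l = (\<chi> k. M$k$1 / M$1$2)$k*(\<chi> k. M$k$2)$l - (\<chi> k. M$k$2)$k*(\<chi> k. M$k$1 / M$1$2)$l"
    unfolding forall4 using assms(3) pf by (simp add: low dg field_simps)
qed

lemma decomp13:
  assumes "skew4 M" "Pf M = 0" "M$1$3 \<noteq> 0"
  shows "\<exists>u w :: real^4. \<forall>k l. M$k$l = u$k*w$l - w$k*u$l"
proof (intro exI)
  have sk: "\<And>i j. M$i$j = - M$j$i" using skew_entries[OF assms(1)] .
  have dg: "\<And>i. M$i$i = 0"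
  proof -
    fix i have "M$i$i = - M$i$i" using sk[of i i] .
    thus "M$i$i = 0" by simp
  qed
  have pf: "M$0$1 * M$2$3 - M$0$2 * M$1$3 + M$0$3 * M$1$2 = 0" using assms(2) by (simp add: Pf_def)
  have low: "M$1$0 = - M$0$1" "M$2$0 = - M$0$2" "M$3$0 = - M$0$3" "M$2$1 = - M$1$2"
     "M$3$1 = - M$1$3" "M$3$2 = - M$2$3" by (rule sk)+
  show "\<forall>k l. M$k$l = (\<chi> k. M$k$1 / M$1$3)$k*(\<chi> k. M$k$3)$l - (\<chi> k. M$k$3)$k*(\<chi> k. M$k$1 / M$1$3)$l"
    unfolding forall4 using assms(3) pf by (simp add: low dg field_simps)
qed

lemma decomp23:
  assumes "skew4 M" "Pf M = 0" "M$2$3 \<noteq> 0"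
  shows "\<exists>u w :: real^4. \<forall>k l. M$k$l = u$k*w$l - w$k*u$l"
proof (intro exI)
  have sk: "\<And>i j. M$i$j = - M$j$i" using skew_entries[OF assms(1)] .
  have dg: "\<And>i. M$i$i = 0"
  proof -
    fix i have "M$i$i = - M$i$i" using sk[of i i] .
    thus "M$i$i = 0" by simp
  qed
  have pf: "M$0$1 * M$2$3 - M$0$2 * M$1$3 + M$0$3 * M$1$2 = 0" using assms(2) by (simp add: Pf_def)
  have low: "M$1$0 = - M$0$1" "M$2$0 = - M$0$2" "M$3$0 = - M$0$3" "M$2$1 = - M$1$2"
     "M$3$1 = - M$1$3" "M$3$2 = - M$2$3" by (rule sk)+
  show "\<forall>k l. M$k$l = (\<chi> k. M$k$2 / M$2$3)$k*(\<chi> k. M$k$3)$l - (\<chi> k. M$k$3)$k*(\<chi> k. M$k$2 / M$2$3)$l"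
    unfolding forall4 using assms(3) pf by (simp add: low dg field_simps)
qed

lemma decomp:
  assumes "skew4 M" "Pf M = 0"
  shows "\<exists>u w :: real^4. \<forall>k l. M$k$l = u$k*w$l - w$k*u$l"
proof (cases "M$0$1 = 0 \<and> M$0$2 = 0 \<and> M$0$3 = 0 \<and> M$1$2 = 0 \<and> M$1$3 = 0 \<and> M$2$3 = 0")
  case True
  have sk: "\<And>i j. M$i$j = - M$j$i" using skew_entries[OF assms(1)] .
  have dg: "\<And>i. M$i$i = 0"
  proof -
    fix i have "M$i$i = - M$i$i" using sk[of i i] .
    thus "M$i$i = 0" by simp
  qed
  have low: "M$1$0 = - M$0$1" "M$2$0 = - M$0$2" "M$3$0 = - M$0$3" "M$2$1 = - M$1$2"
     "M$3$1 = - M$1$3" "M$3$2 = - M$2$3" by (rule sk)+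
  show ?thesis
    by (rule exI[of _ 0], rule exI[of _ 0]) (unfold forall4, simp add: low dg True)
next
  case False
  then show ?thesis using assms decomp01 decomp02 decomp03 decomp12 decomp13 decomp23 by blast
qed


lemma J_entries:
  "Jmat$0$0 = 0" "Jmat$0$1 = 1" "Jmat$0$2 = 0" "Jmat$0$3 = 0"
  "Jmat$1$0 = -1" "Jmat$1$1 = 0" "Jmat$1$2 = 0" "Jmat$1$3 = 0"
  "Jmat$2$0 = 0" "Jmat$2$1 = 0" "Jmat$2$2 = 0" "Jmat$2$3 = 1"
  "Jmat$3$0 = 0" "Jmat$3$1 = 0" "Jmat$3$2 = -1" "Jmat$3$3 = 0"
  by (simp_all add: Jmat_def)

lemma J_skew: "Jmat$j$i = - Jmat$i$j"
proof -
  have "\<forall>i j. Jmat$j$i = - Jmat$i$j" unfolding forall4 by (simp add: J_entries)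
  thus ?thesis by blast
qed

lemma JJ: "Jmat ** Jmat = - mat 1"
  unfolding vec_eq_iff forall4 by (simp add: matrix_matrix_mult_def sum4 J_entries mat_def)

lemma normal_form:
  fixes A :: "real^4^4"
  assumes sk: "skew4 A" and pfA: "Pf A = p" and sA: "s4 A = q" and p: "p < 0"
  defines "mu \<equiv> sqrt (q^2 - 4*p)"
  defines "l1 \<equiv> (q - mu)/2"
  defines "l2 \<equiv> (q + mu)/2"
  defines "D \<equiv> (\<chi> i j. if i = 0 \<and> j = 1 then l1 else if i = 1 \<and> j = 0 then -l1
     else if i = 2 \<and> j = 3 then l2 else if i = 3 \<and> j = 2 then -l2 else 0) :: real^4^4"
  shows "\<exists>R::real^4^4. R ** Jmat ** transpose R = Jmat \<and> R ** D ** transpose R = A"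
proof -
  have disc: "q^2 - 4*p > 0" using p zero_le_power2[of q] by linarith
  have mupos: "mu > 0" unfolding mu_def using disc by simp
  have mu2: "mu^2 = q^2 - 4*p" unfolding mu_def using disc by simp
  have root1: "l1^2 - q*l1 + p = 0" unfolding l1_def using mu2 by (simp add: field_simps power2_eq_square)
  have root2: "l2^2 - q*l2 + p = 0" unfolding l2_def using mu2 by (simp add: field_simps power2_eq_square)
  have ska: "\<And>i j. A$i$j = - A$j$i" using skew_entries[OF sk] .
  define M where "M = (\<chi> i j. (A$i$j - l1 * Jmat$i$j) / mu)"
  define N where "N = (\<chi> i j. (A$i$j - l2 * Jmat$i$j) / mu)"
  have skM: "skew4 M"
  proof -
    have h: "M$j$i = - M$i$j" for i j unfolding M_def using ska[of j i] J_skew[of i j] mupos by (simp add: field_simps)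
    have "transpose M = - M"
      by (rule vec_eq_iff[THEN iffD2], rule allI, rule vec_eq_iff[THEN iffD2], rule allI, unfold transpose_def vector_uminus_component vec_lambda_beta, rule h)
    thus ?thesis unfolding skew4_def .
  qed
  have skN: "skew4 N"
  proof -
    have h: "N$j$i = - N$i$j" for i j unfolding N_def using ska[of j i] J_skew[of i j] mupos by (simp add: field_simps)
    have "transpose N = - N"
      by (rule vec_eq_iff[THEN iffD2], rule allI, rule vec_eq_iff[THEN iffD2], rule allI, unfold transpose_def vector_uminus_component vec_lambda_beta, rule h)
    thus ?thesis unfolding skew4_def .
  qed
  have pfA': "A$0$1 * A$2$3 - A$0$2 * A$1$3 + A$0$3 * A$1$2 = p" using pfA by (simp add: Pf_def)
  have sA': "A$0$1 + A$2$3 = q" using sA by (simp add: s4_def)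
  have "Pf M = ((A$0$1 - l1) * (A$2$3 - l1) - A$0$2 * A$1$3 + A$0$3 * A$1$2) / mu^2"
    unfolding Pf_def M_def using mupos by (simp add: J_entries field_simps power2_eq_square)
  also have "\<dots> = (l1^2 - q*l1 + p) / mu^2" unfolding sA'[symmetric] pfA'[symmetric]
    by (simp add: algebra_simps power2_eq_square)
  finally have pfM: "Pf M = 0" using root1 by simp
  have "Pf N = ((A$0$1 - l2) * (A$2$3 - l2) - A$0$2 * A$1$3 + A$0$3 * A$1$2) / mu^2"
    unfolding Pf_def N_def using mupos by (simp add: J_entries field_simps power2_eq_square)
  also have "\<dots> = (l2^2 - q*l2 + p) / mu^2" unfolding sA'[symmetric] pfA'[symmetric]
    by (simp add: algebra_simps power2_eq_square)
  finally have pfN: "Pf N = 0" using root2 by simp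
  obtain u w where uw: "\<And>k l. M$k$l = u$k*w$l - w$k*u$l" using decomp[OF skM pfM] by blast
  obtain x y where xy: "\<And>k l. N$k$l = x$k*y$l - y$k*x$l" using decomp[OF skN pfN] by blast
  define R :: "real^4^4" where "R = (\<chi> i j. if j = 0 then y$i else if j = 1 then x$i else if j = 2 then u$i else w$i)"
  have l21: "l2 - l1 = mu" unfolding l1_def l2_def by (simp add: field_simps)
  have MNJ: "M$i$j - N$i$j = Jmat$i$j" for i j
    unfolding M_def N_def using mupos l21 by (simp add: field_simps)
  have MNA: "l2 * M$i$j - l1 * N$i$j = A$i$j" for i j
    unfolding M_def N_def using mupos l21 by (simp add: field_simps)
  have RJ: "(R ** Jmat ** transpose R)$i$j = Jmat$i$j" for i j
  proof -
    have "(R ** Jmat ** transpose R)$i$j = M$i$j - N$i$j"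
      unfolding uw xy by (simp add: matrix_matrix_mult_def sum4 J_entries R_def transpose_def algebra_simps)
    thus ?thesis using MNJ by simp
  qed
  have RD: "(R ** D ** transpose R)$i$j = A$i$j" for i j
  proof -
    have "(R ** D ** transpose R)$i$j = l2 * M$i$j - l1 * N$i$j"
      unfolding uw xy by (simp add: matrix_matrix_mult_def sum4 D_def R_def transpose_def algebra_simps)
    thus ?thesis using MNA by simp
  qed
  show ?thesis using RJ RD by (intro exI[of _ R]) (simp add: vec_eq_iff)
qed


lemma mneg: "(R::real^4^4) ** (- X) = - (R ** X)"
  by (simp add: vec_eq_iff matrix_matrix_mult_def sum_negf)

lemma sympl_inv:
  fixes R :: "real^4^4"
  assumes "R ** Jmat ** transpose R = Jmat"
  shows "R ** (- (Jmat ** transpose R ** Jmat)) = mat 1"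
        "(- (Jmat ** transpose R ** Jmat)) ** R = mat 1"
proof -
  have "R ** (- (Jmat ** transpose R ** Jmat)) = - ((R ** Jmat ** transpose R) ** Jmat)"
    by (simp add: matrix_mul_assoc mneg)
  also have "\<dots> = mat 1" using assms JJ by simp
  finally show 1: "R ** (- (Jmat ** transpose R ** Jmat)) = mat 1" .
  then show "(- (Jmat ** transpose R ** Jmat)) ** R = mat 1"
    using matrix_left_right_inverse by blast
qed

theorem lemma4p4:
  fixes p q :: real
  assumes "p < 0"
  shows "\<forall>A\<in>Aminus p q. \<forall>B\<in>Aminus p q. \<exists>P\<in>Sp4. B = rho P A"
proof (intro ballI)
  fix A B assume A: "A \<in> Aminus p q" and B: "B \<in> Aminus p q"
  define mu where "mu \<equiv> sqrt (q^2 - 4*p)"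
  define l1 where "l1 \<equiv> (q - mu)/2"
  define l2 where "l2 \<equiv> (q + mu)/2"
  define D where "D \<equiv> (\<chi> i j. if i = 0 \<and> j = 1 then l1 else if i = 1 \<and> j = 0 then -l1
     else if i = 2 \<and> j = 3 then l2 else if i = 3 \<and> j = 2 then -l2 else 0) :: real^4^4"
  obtain R where R: "R ** Jmat ** transpose R = Jmat" "R ** D ** transpose R = A"
    using normal_form[of A p q] A assms unfolding D_def l1_def l2_def mu_def Aminus_def S4_def by auto
  obtain S where S: "S ** Jmat ** transpose S = Jmat" "S ** D ** transpose S = B"
    using normal_form[of B p q] B assms unfolding D_def l1_def l2_def mu_def Aminus_def S4_def by auto
  define Ri where "Ri = - (Jmat ** transpose R ** Jmat)"
  have Ri: "Ri ** R = mat 1" using sympl_inv(2)[OF R(1)] unfolding Ri_def .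
  define P where "P = transpose Ri ** transpose S"
  have tP: "transpose P = S ** Ri" unfolding P_def by (simp add: matrix_transpose_mul)
  have key: "Ri ** (R ** X ** transpose R) ** transpose Ri = X" for X :: "real^4^4"
  proof -
    have "Ri ** (R ** X ** transpose R) ** transpose Ri = (Ri ** R) ** X ** transpose (Ri ** R)"
      by (simp add: matrix_mul_assoc matrix_transpose_mul)
    thus ?thesis using Ri by simp
  qed
  have gen: "transpose P ** (R ** X ** transpose R) ** P = S ** X ** transpose S" for X
  proof -
    have "transpose P ** (R ** X ** transpose R) ** P = S ** (Ri ** (R ** X ** transpose R) ** transpose Ri) ** transpose S"
      unfolding tP by (simp add: P_def matrix_mul_assoc)
    thus ?thesis using key by simp
  qed
  have "P \<in> Sp4" unfolding Sp4_def using gen[of Jmat] R(1) S(1) by simp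
  moreover have "B = rho P A" unfolding rho_def using gen[of D] R(2) S(2) by simp
  ultimately show "\<exists>P\<in>Sp4. B = rho P A" by blast
qed

end
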